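(* Fix $n,\mu\in\mathbb{N}$ and $\delta\in\mathbb{R}$. Let $S$ be the set of pairs $(x,z)\in(0,+\infty)^n\times(-\delta,+\infty)^n$ such that $x_1\geq x_2\geq\cdots\geq x_n$ and, writing $p_i=x_i^{1/\mu}-\delta$ (so that $x=(p+\delta)^{\mu\downarrow}$), $$(p+\delta)^{\mu}\succ_w (z+\delta)^{\mu}\quad\text{and}\quad \sum_{i=1}^n (p_i+\delta)^k\geq\sum_{i=1}^n (z_i+\delta)^k\ \text{ for all }k\in\{1,\dots,\mu-1\}.$$ Then $S$ is a convex subset of $\mathbb{R}^n\times\mathbb{R}^n$.
   Context: $(y+\delta)^\mu$ denotes the vector with components $(y_i+\delta)^\mu$, and $y^{\downarrow}$ the vector of components of $y$ sorted in descending order. $x\succ_w y$ (weak majorization) means $\sum_{i=1}^k x^{\downarrow}_i\geq\sum_{i=1}^k y^{\downarrow}_i$ for all $k=1,\dots,n$. (These are the hypotheses of a sufficient condition for $K\prod(s-z_i)/\prod(s-p_i)$, $K>0$, with real zeros and poles, to be logarithmically completely monotonic.) *)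

theory Defs
  imports "HOL-Analysis.Analysis"
begin

definition dsort :: "real ^ 'n::{finite,linorder} \<Rightarrow> real list" where
  "dsort y = rev (sort (map (\<lambda>i. y $ i) (sorted_list_of_set (UNIV :: 'n set))))"

definition weak_majorizes :: "real ^ 'n::{finite,linorder} \<Rightarrow> real ^ 'n::{finite,linorder} \<Rightarrow> bool" where
  "weak_majorizes x y \<longleftrightarrow>
     (\<forall>k\<in>{1..CARD('n)}. sum_list (take k (dsort x)) \<ge> sum_list (take k (dsort y)))"

end

theory Submission
  imports Defs
begin

lemma pow_conv:
  fixes a b u v :: real
  assumes "a \<ge> 0" "b \<ge> 0" "u \<ge> 0" "v \<ge> 0" "u + v = 1"
  shows "(u * a + v * b)^m \<le> u * a ^ m + v * b ^ m"
proof -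
  have c: "convex_on {0::real..} (\<lambda>x. x^m)"
  proof (cases "even m")
    case True then show ?thesis using convex_power_even convex_on_subset by blast
  next
    case False then show ?thesis using convex_power_odd by blast
  qed
  have "((1-v) *\<^sub>R a + v *\<^sub>R b)^m \<le> (1-v) * a ^ m + v * b ^ m"
    using convex_onD[OF c, of v a b] assms by auto
  moreover have "u = 1 - v" using assms by simp
  ultimately show ?thesis by simp
qed

lemma powr_conc:
  fixes a b u v r :: real
  assumes "a > 0" "b > 0" "u \<ge> 0" "v \<ge> 0" "u + v = 1" "0 \<le> r" "r \<le> 1"
  shows "u * a powr r + v * b powr r \<le> (u * a + v * b) powr r"
proof -
  have c: "concave_on {0::real<..} (\<lambda>x. x powr r)"
  proof (rule f''_le0_imp_concave)
    show "((\<lambda>x. x powr r) has_real_derivative r * x powr (r - 1)) (at x)" if "x \<in> {0<..}" for x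
      using that by (auto intro!: derivative_eq_intros)
    show "((\<lambda>x. r * x powr (r - 1)) has_real_derivative r * ((r - 1) * x powr (r - 1 - 1))) (at x)" if "x \<in> {0<..}" for x
      using that by (auto intro!: derivative_eq_intros)
    show "r * ((r - 1) * x powr (r - 1 - 1)) \<le> 0" if "x \<in> {0<..}" for x
      using that assms by (simp add: mult_nonneg_nonpos mult_nonpos_nonneg)
  qed simp
  have "((1-v) *\<^sub>R a + v *\<^sub>R b) powr r \<ge> (1-v) * a powr r + v * b powr r"
    using concave_onD[OF c, of v a b] assms by auto
  moreover have "u = 1 - v" using assms by simp
  ultimately show ?thesis by simp
qed

lemma conv_gt:
  fixes a b u v c :: real
  assumes "a > c" "b > c" "u \<ge> 0" "v \<ge> 0" "u + v = 1"
  shows "u * a + v * b > c"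
proof (cases "u = 0")
  case True then show ?thesis using assms by simp
next
  case False
  then have "u > 0" using assms by simp
  have "u * a + v * b - c = u * (a - c) + v * (b - c)" using assms(5) by (simp add: algebra_simps) (metis mult.right_neutral distrib_left)
  moreover have "u * (a - c) > 0" using \<open>u>0\<close> assms by simp
  moreover have "v * (b - c) \<ge> 0" using assms by simp
  ultimately show ?thesis by linarith
qed

lemma exch:
  fixes f :: "'a \<Rightarrow> real"
  assumes "finite S" "finite T" "card T = card S" "\<forall>i\<in>T-S. \<forall>j\<in>S-T. f i \<le> f j"
  shows "sum f T \<le> sum f S"
proof -
  have cd: "card (T-S) = card (S-T)"
    using assms by (simp add: card_Diff_subset_Int Int_commute)
  have "sum f (T-S) \<le> sum f (S-T)"
  proof (cases "S-T = {}")
    case True then have "T-S = {}" using cd assms by (metis card_0_eq finite_Diff)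
    then show ?thesis using True by simp
  next
    case False
    define t where "t = Min (f ` (S-T))"
    have fin: "finite (S-T)" using assms by simp
    have "\<forall>i\<in>T-S. f i \<le> t" unfolding t_def using assms False fin by (auto intro!: Min.boundedI)
    then have "sum f (T-S) \<le> of_nat (card (T-S)) * t" by (intro sum_bounded_above) auto
    moreover have "\<forall>j\<in>S-T. t \<le> f j" unfolding t_def using fin by auto
    then have "of_nat (card (S-T)) * t \<le> sum f (S-T)" by (intro sum_bounded_below) auto
    ultimately show ?thesis using cd by simp
  qed
  moreover have "sum f T = sum f (T \<inter> S) + sum f (T - S)" using assms by (simp add: sum.Int_Diff)
  moreover have "sum f S = sum f (S \<inter> T) + sum f (S - T)" using assms by (simp add: sum.Int_Diff)
  ultimately show ?thesis by (simp add: Int_commute)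
qed

lemma dsort_eq:
  fixes v :: "real ^ 'n::{finite,linorder}"
  assumes "distinct J" "set J = UNIV" "sorted_wrt (\<ge>) (map (($) v) J)"
  shows "dsort v = map (($) v) J"
proof -
  have m: "mset J = mset (sorted_list_of_set (UNIV::'n set))"
    using assms by (simp add: set_eq_iff_mset_eq_distinct[symmetric])
  have "sort (map (\<lambda>i. v$i) (sorted_list_of_set UNIV)) = rev (map (($) v) J)"
    apply (rule properties_for_sort)
    using m assms(3) by (auto simp: sorted_wrt_rev mset_map)
  then show ?thesis by (simp add: dsort_def)
qed

lemma top_char:
  fixes v :: "real ^ 'n::{finite,linorder}"
  assumes "distinct J" "set J = UNIV" "sorted_wrt (\<ge>) (map (($) v) J)"
  shows "sum_list (take k (dsort v)) = (\<Sum>i\<in>set (take k J). v$i)"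
    and "card T = k \<Longrightarrow> (\<Sum>i\<in>T. v$i) \<le> sum_list (take k (dsort v))"
proof -
  show e: "sum_list (take k (dsort v)) = (\<Sum>i\<in>set (take k J). v$i)"
    using dsort_eq[OF assms] assms(1) by (simp add: take_map sum_list_distinct_conv_sum_set)
  assume "card T = k"
  have lJ: "length J = CARD('n)" using assms distinct_card by fastforce
  have "card T \<le> CARD('n)" by (simp add: card_mono)
  then have cS: "card (set (take k J)) = k" using \<open>card T = k\<close> lJ assms(1)
    by (simp add: distinct_card)
  have sep: "\<forall>i\<in>T - set (take k J). \<forall>j\<in>set (take k J) - T. v$i \<le> v$j"
  proof (intro ballI)
    fix i j assume i: "i \<in> T - set (take k J)" and j: "j \<in> set (take k J) - T"
    have "i \<in> set (drop k J)" using i assms(2)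
      by (metis DiffD2 UNIV_I Un_iff append_take_drop_id set_append)
    have "sorted_wrt (\<ge>) (map (($) v) (take k J) @ map (($) v) (drop k J))"
      using assms(3) by (metis append_take_drop_id map_append)
    then show "v$i \<le> v$j" using \<open>i \<in> set (drop k J)\<close> j
      by (auto simp: sorted_wrt_append)
  qed
  have "(\<Sum>i\<in>T. v$i) \<le> (\<Sum>i\<in>set (take k J). v$i)"
    by (rule exch) (use cS \<open>card T = k\<close> sep in auto)
  then show "(\<Sum>i\<in>T. v$i) \<le> sum_list (take k (dsort v))" using e by simp
qed

lemma exJ:
  fixes v :: "real ^ 'n::{finite,linorder}"
  shows "\<exists>J. distinct J \<and> set J = UNIV \<and> sorted_wrt (\<ge>) (map (($) v) J)"
proof (intro exI conjI)
  let ?J = "sort_key (\<lambda>i. - v$i) (sorted_list_of_set (UNIV::'n set))"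
  show "distinct ?J" by simp
  show "set ?J = UNIV" by simp
  have "sorted (map (\<lambda>i. - v$i) ?J)" by (rule sorted_sort_key)
  then show "sorted_wrt (\<ge>) (map (($) v) ?J)"
    by (simp add: sorted_wrt_map)
qed

lemma sortedI:
  fixes v :: "real ^ 'n::{finite,linorder}"
  assumes "\<forall>i j. i \<le> j \<longrightarrow> v $ j \<le> v $ i"
  shows "sorted_wrt (\<ge>) (map (($) v) (sorted_list_of_set (UNIV::'n set)))"
proof -
  have "sorted_wrt (\<le>) (sorted_list_of_set (UNIV::'n set))"
    using sorted_sorted_list_of_set by blast
  then show ?thesis unfolding sorted_wrt_map
    by (rule sorted_wrt_mono_rel[rotated]) (use assms in auto)
qed


definition Qp :: "real \<Rightarrow> nat \<Rightarrow> real ^ 'n::{finite,linorder} \<Rightarrow> real ^ 'n::{finite,linorder} \<Rightarrow> bool" where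
  "Qp \<delta> \<mu> x z \<longleftrightarrow> (\<forall>i. 0 < x$i) \<and> (\<forall>i. - \<delta> < z$i) \<and> (\<forall>i j. i \<le> j \<longrightarrow> x$j \<le> x$i) \<and>
     (\<forall>k\<in>{1..CARD('n::{finite,linorder})}. sum_list (take k (dsort (\<chi> i. (z$i + \<delta>) ^ \<mu>))) \<le> sum_list (take k (dsort x))) \<and>
     (\<forall>k\<in>{1..\<mu> - 1}. (\<Sum>i\<in>UNIV. (z$i + \<delta>) ^ k) \<le> (\<Sum>i\<in>UNIV. x$i powr (real k / real \<mu>)))"

lemma top_sorted:
  fixes v :: "real ^ 'n::{finite,linorder}"
  assumes "\<forall>i j. i \<le> j \<longrightarrow> v $ j \<le> v $ i"
  shows "sum_list (take k (dsort v)) = (\<Sum>i\<in>set (take k (sorted_list_of_set (UNIV::'n set))). v$i)"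
  by (rule top_char(1)) (use sortedI[OF assms] in auto)

lemma top_some:
  fixes v :: "real ^ 'n::{finite,linorder}"
  assumes "k \<le> CARD('n)"
  shows "\<exists>T. card T = k \<and> sum_list (take k (dsort v)) = (\<Sum>i\<in>T. v$i)"
proof -
  obtain J where J: "distinct J" "set J = UNIV" "sorted_wrt (\<ge>) (map (($) v) J)" using exJ by blast
  have lJ: "length J = CARD('n)" using J distinct_card by fastforce
  have "card (set (take k J)) = k" using J(1) lJ assms by (simp add: distinct_card)
  then show ?thesis using top_char(1)[OF J] by blast
qed

lemma top_ge:
  fixes v :: "real ^ 'n::{finite,linorder}"
  assumes "card T = k"
  shows "(\<Sum>i\<in>T. v$i) \<le> sum_list (take k (dsort v))"
proof -
  obtain J where J: "distinct J" "set J = UNIV" "sorted_wrt (\<ge>) (map (($) v) J)" using exJ by blast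
  show ?thesis using top_char(2)[OF J assms] .
qed

lemma Q_conv:
  fixes x1 x2 z1 z2 :: "real ^ 'n::{finite,linorder}"
  assumes Q1: "Qp \<delta> \<mu> x1 z1" and Q2: "Qp \<delta> \<mu> x2 z2" and uv: "0 \<le> u" "0 \<le> v" "u + v = 1" and mu: "\<mu> \<ge> 1"
  shows "Qp \<delta> \<mu> (u *\<^sub>R x1 + v *\<^sub>R x2) (u *\<^sub>R z1 + v *\<^sub>R z2)"
proof -
  define x where "x = u *\<^sub>R x1 + v *\<^sub>R x2"
  define z where "z = u *\<^sub>R z1 + v *\<^sub>R z2"
  have xi: "x$i = u * x1$i + v * x2$i" for i by (simp add: x_def)
  have zi: "z$i + \<delta> = u * (z1$i + \<delta>) + v * (z2$i + \<delta>)" for i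
    using uv by (simp add: z_def algebra_simps) (metis distrib_left mult.right_neutral)
  note q1 = Q1[unfolded Qp_def] and q2 = Q2[unfolded Qp_def]
  have pos: "\<forall>i. 0 < x$i" unfolding xi using q1 q2 uv by (auto intro: conv_gt)
  have posz: "\<forall>i. - \<delta> < z$i" unfolding z_def using q1 q2 uv by (auto intro: conv_gt)
  have z1p: "0 \<le> z1$i + \<delta>" and z2p: "0 \<le> z2$i + \<delta>" for i using q1 q2 by (smt (verit))+
  have anti: "\<forall>i j. i \<le> j \<longrightarrow> x$j \<le> x$i"
  proof (intro allI impI)
    fix i j :: 'n assume "i \<le> j"
    then have "x1$j \<le> x1$i" "x2$j \<le> x2$i" using q1 q2 by auto
    then show "x$j \<le> x$i" unfolding xi using uv by (intro add_mono mult_left_mono) auto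
  qed
  have maj: "\<forall>k\<in>{1..CARD('n)}. sum_list (take k (dsort (\<chi> i. (z$i + \<delta>) ^ \<mu>))) \<le> sum_list (take k (dsort x))"
  proof
    fix k assume k: "k \<in> {1..CARD('n)}"
    obtain T where T: "card T = k" "sum_list (take k (dsort (\<chi> i. (z$i + \<delta>) ^ \<mu>))) = (\<Sum>i\<in>T. (z$i + \<delta>) ^ \<mu>)"
      using top_some[of k "(\<chi> i. (z$i + \<delta>) ^ \<mu>)"] k by auto
    let ?F = "set (take k (sorted_list_of_set (UNIV::'n set)))"
    have "(\<Sum>i\<in>T. (z$i + \<delta>) ^ \<mu>) \<le> (\<Sum>i\<in>T. u * (z1$i + \<delta>) ^ \<mu> + v * (z2$i + \<delta>) ^ \<mu>)"
      unfolding zi by (intro sum_mono pow_conv) (use uv z1p z2p in auto)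
    also have "\<dots> = u * (\<Sum>i\<in>T. (\<chi> i. (z1$i + \<delta>) ^ \<mu>) $ i) + v * (\<Sum>i\<in>T. (\<chi> i. (z2$i + \<delta>) ^ \<mu>) $ i)"
      by (simp add: sum.distrib sum_distrib_left)
    also have "\<dots> \<le> u * sum_list (take k (dsort (\<chi> i. (z1$i + \<delta>) ^ \<mu>))) + v * sum_list (take k (dsort (\<chi> i. (z2$i + \<delta>) ^ \<mu>)))"
      using uv by (intro add_mono mult_left_mono top_ge T(1)) auto
    also have "\<dots> \<le> u * sum_list (take k (dsort x1)) + v * sum_list (take k (dsort x2))"
      using uv q1 q2 k by (intro add_mono mult_left_mono) auto
    also have "\<dots> = u * (\<Sum>i\<in>?F. x1$i) + v * (\<Sum>i\<in>?F. x2$i)"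
      using q1 q2 top_sorted by metis
    also have "\<dots> = (\<Sum>i\<in>?F. x$i)" unfolding xi by (simp add: sum.distrib sum_distrib_left)
    also have "\<dots> = sum_list (take k (dsort x))" using top_sorted[OF anti] by metis
    finally show "sum_list (take k (dsort (\<chi> i. (z$i + \<delta>) ^ \<mu>))) \<le> sum_list (take k (dsort x))"
      using T(2) by simp
  qed
  have ps: "\<forall>k\<in>{1..\<mu> - 1}. (\<Sum>i\<in>UNIV. (z$i + \<delta>) ^ k) \<le> (\<Sum>i\<in>UNIV. x$i powr (real k / real \<mu>))"
  proof
    fix k assume k: "k \<in> {1..\<mu> - 1}"
    have r: "0 \<le> real k / real \<mu>" "real k / real \<mu> \<le> 1" using k mu by auto
    have "(\<Sum>i\<in>UNIV. (z$i + \<delta>) ^ k) \<le> (\<Sum>i\<in>UNIV. u * (z1$i + \<delta>) ^ k + v * (z2$i + \<delta>) ^ k)"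
      unfolding zi by (intro sum_mono pow_conv) (use uv z1p z2p in auto)
    also have "\<dots> = u * (\<Sum>i\<in>UNIV. (z1$i + \<delta>) ^ k) + v * (\<Sum>i\<in>UNIV. (z2$i + \<delta>) ^ k)"
      by (simp add: sum.distrib sum_distrib_left)
    also have "\<dots> \<le> u * (\<Sum>i\<in>UNIV. x1$i powr (real k / real \<mu>)) + v * (\<Sum>i\<in>UNIV. x2$i powr (real k / real \<mu>))"
      using uv q1 q2 k by (intro add_mono mult_left_mono) auto
    also have "\<dots> = (\<Sum>i\<in>UNIV. u * x1$i powr (real k / real \<mu>) + v * x2$i powr (real k / real \<mu>))"
      by (simp add: sum.distrib sum_distrib_left)
    also have "\<dots> \<le> (\<Sum>i\<in>UNIV. x$i powr (real k / real \<mu>))"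
      unfolding xi by (intro sum_mono powr_conc) (use uv q1 q2 r in auto)
    finally show "(\<Sum>i\<in>UNIV. (z$i + \<delta>) ^ k) \<le> (\<Sum>i\<in>UNIV. x$i powr (real k / real \<mu>))" .
  qed
  show ?thesis unfolding Qp_def x_def[symmetric] z_def[symmetric]
    using pos posz anti maj ps by blast
qed

lemma pw:
  fixes t :: real
  assumes "0 < t"
  shows "(t powr (1 / real \<mu>)) ^ k = t powr (real k / real \<mu>)"
proof -
  have "(t powr (1 / real \<mu>)) ^ k = (t powr (1 / real \<mu>)) powr real k"
    using assms by (simp add: powr_realpow)
  also have "\<dots> = t powr (real k / real \<mu>)" by (simp add: powr_powr)
  finally show ?thesis .
qed

theorem proposition8:
  fixes \<mu> :: nat and \<delta> :: real
  assumes "\<mu> \<ge> 1"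
  shows "convex {(x :: real ^ 'n::{finite,linorder}, z :: real ^ 'n::{finite,linorder}).
            (\<forall>i. 0 < x $ i) \<and> (\<forall>i. - \<delta> < z $ i) \<and>
            (\<forall>i j. i \<le> j \<longrightarrow> x $ j \<le> x $ i) \<and>
            (let p = (\<chi> i. x $ i powr (1 / real \<mu>) - \<delta>) in
               weak_majorizes (\<chi> i. (p $ i + \<delta>) ^ \<mu>) (\<chi> i. (z $ i + \<delta>) ^ \<mu>) \<and>
               (\<forall>k\<in>{1..\<mu> - 1}. (\<Sum>i\<in>UNIV. (p $ i + \<delta>) ^ k) \<ge> (\<Sum>i\<in>UNIV. (z $ i + \<delta>) ^ k)))}"
    (is "convex ?S")
proof -
  have eq: "?S = {(x, z). Qp \<delta> \<mu> x z}"
  proof -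
    have "P x z \<longleftrightarrow> Qp \<delta> \<mu> x z" if "P = (\<lambda>x z. (x, z) \<in> ?S)" for P and x z :: "real ^ 'n::{finite,linorder}"
    proof (cases "\<forall>i. 0 < x $ i")
      case True
      have e1: "(\<chi> i. ((\<chi> i. x $ i powr (1 / real \<mu>) - \<delta>) $ i + \<delta>) ^ \<mu>) = x"
        using True assms by (simp add: vec_eq_iff pw less_imp_le)
      have e2: "((\<chi> i. x $ i powr (1 / real \<mu>) - \<delta>) $ i + \<delta>) ^ k = x$i powr (real k / real \<mu>)" for i k
        using True by (simp add: pw)
      have e3: "(\<chi> i. x $ i powr (real \<mu> / real \<mu>)) = x"
        using assms True by (simp add: vec_eq_iff less_imp_le)
      show ?thesis unfolding that Qp_def weak_majorizes_def
        by (simp only: mem_Collect_eq case_prod_conv Let_def e2 e3)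
    next
      case False
      then show ?thesis unfolding that Qp_def by auto
    qed
    then show ?thesis by auto
  qed
  show ?thesis unfolding eq
  proof (rule convexI)
    fix p q :: "(real ^ 'n::{finite,linorder}) \<times> (real ^ 'n::{finite,linorder})" and u v :: real
    assume p: "p \<in> {(x, z). Qp \<delta> \<mu> x z}" and q: "q \<in> {(x, z). Qp \<delta> \<mu> x z}" and uv: "0 \<le> u" "0 \<le> v" "u + v = 1"
    obtain a b where ab: "p = (a, b)" by (cases p)
    obtain c d where cd: "q = (c, d)" by (cases q)
    have "Qp \<delta> \<mu> (u *\<^sub>R a + v *\<^sub>R c) (u *\<^sub>R b + v *\<^sub>R d)"
      using Q_conv assms p q uv unfolding ab cd by blast
    then show "u *\<^sub>R p + v *\<^sub>R q \<in> {(x, z). Qp \<delta> \<mu> x z}" unfolding ab cd by simp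
  qed
qed

end
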